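(* The Hilbert functions $H_{\mathbb{k}[\Delta_\ell]}$, $\ell=0,\dots,n$, span the extremal rays of the cone of Hilbert functions of Stanley–Reisner rings over $S=\mathbb{k}[x_1,\dots,x_n]$ (and this cone is simplicial).
   Context: For a simplicial complex $\Delta$ on $[n]$, $\mathbb{k}[\Delta]=S/I_\Delta$ is its Stanley–Reisner ring, with coarse Hilbert function $H_{\mathbb{k}[\Delta]}(i)=\dim_{\mathbb{k}}\mathbb{k}[\Delta]_i$. For $0\le\ell\le n$, $\Delta_\ell=\{\sigma\subseteq[n]:|\sigma|\le\ell\}$. The cone of Hilbert functions of Stanley–Reisner rings is the convex cone in $\mathbb{R}^{\mathbb{N}}$ spanned by the Hilbert functions of all $\mathbb{k}[\Delta]$, $\Delta$ a simplicial complex on $[n]$. *)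

theory Defs
  imports Complex_Main
begin

definition simplicial_complex :: "nat \<Rightarrow> nat set set \<Rightarrow> bool" where
  "simplicial_complex n \<Delta> \<longleftrightarrow>
     \<Delta> \<noteq> {} \<and> (\<forall>\<sigma>\<in>\<Delta>. \<sigma> \<subseteq> {1..n}) \<and> (\<forall>\<sigma>\<in>\<Delta>. \<forall>\<tau>. \<tau> \<subseteq> \<sigma> \<longrightarrow> \<tau> \<in> \<Delta>)"

definition skel :: "nat \<Rightarrow> nat \<Rightarrow> nat set set" where
  "skel n l = {\<sigma>. \<sigma> \<subseteq> {1..n} \<and> card \<sigma> \<le> l}"

text \<open>Monomials x^a of S = k[x_1..x_n] are exponent vectors a supported in [n];
  the degree is the sum of the exponents and the support is {j. a j > 0}.\<close>
definition monomials_deg :: "nat \<Rightarrow> nat \<Rightarrow> (nat \<Rightarrow> nat) set" where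
  "monomials_deg n i = {a. (\<forall>j. j \<notin> {1..n} \<longrightarrow> a j = 0) \<and> (\<Sum>j\<in>{1..n}. a j) = i}"

definition msupp :: "nat \<Rightarrow> (nat \<Rightarrow> nat) \<Rightarrow> nat set" where
  "msupp n a = {j\<in>{1..n}. a j \<noteq> 0}"

text \<open>The Stanley--Reisner ideal I_Delta is generated by the squarefree monomials x^sigma,
  sigma a non-face. A monomial x^a lies in I_Delta iff some non-face is contained in its support.\<close>
definition in_SR_ideal :: "nat \<Rightarrow> nat set set \<Rightarrow> (nat \<Rightarrow> nat) \<Rightarrow> bool" where
  "in_SR_ideal n \<Delta> a \<longleftrightarrow> (\<exists>\<sigma>. \<sigma> \<subseteq> {1..n} \<and> \<sigma> \<notin> \<Delta> \<and> \<sigma> \<subseteq> msupp n a)"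

text \<open>Coarse Hilbert function of k[Delta] = S/I_Delta: since I_Delta is a monomial ideal, the
  monomials not in I_Delta form a k-basis of k[Delta], so dim_k k[Delta]_i is the number of
  degree-i monomials outside I_Delta (independent of the field k).\<close>
definition SR_hilbert :: "nat \<Rightarrow> nat set set \<Rightarrow> nat \<Rightarrow> real" where
  "SR_hilbert n \<Delta> i = real (card {a \<in> monomials_deg n i. \<not> in_SR_ideal n \<Delta> a})"

definition SR_cone :: "nat \<Rightarrow> (nat \<Rightarrow> real) set" where
  "SR_cone n = {f. \<exists>c :: nat set set \<Rightarrow> real.
      (\<forall>\<Delta>. 0 \<le> c \<Delta>) \<and>
      (\<forall>i. f i = (\<Sum>\<Delta>\<in>{\<Delta>. simplicial_complex n \<Delta>}. c \<Delta> * SR_hilbert n \<Delta> i))}"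

definition extremal_ray :: "(nat \<Rightarrow> real) set \<Rightarrow> (nat \<Rightarrow> real) \<Rightarrow> bool" where
  "extremal_ray C v \<longleftrightarrow> v \<in> C \<and> v \<noteq> (\<lambda>i. 0) \<and>
     (\<forall>a\<in>C. \<forall>b\<in>C. (\<forall>i. v i = a i + b i) \<longrightarrow>
        (\<exists>t\<ge>0. \<forall>i. a i = t * v i) \<and> (\<exists>t\<ge>0. \<forall>i. b i = t * v i))"

end

theory Submission imports Defs begin

lemma finite_mono: "finite (monomials_deg n i)"
proof -
  have "monomials_deg n i \<subseteq> {f. \<forall>x. (x \<in> {1..n} \<longrightarrow> f x \<in> {0..i}) \<and> (x \<notin> {1..n} \<longrightarrow> f x = 0)}"
  proof
    fix a assume a: "a \<in> monomials_deg n i"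
    have "a x \<le> i" if x: "x \<in> {1..n}" for x
    proof -
      have "a x \<le> (\<Sum>j\<in>{1..n}. a j)" by (rule member_le_sum) (use x in auto)
      then show ?thesis using a unfolding monomials_deg_def by simp
    qed
    then show "a \<in> {f. \<forall>x. (x \<in> {1..n} \<longrightarrow> f x \<in> {0..i}) \<and> (x \<notin> {1..n} \<longrightarrow> f x = 0)}"
      using a unfolding monomials_deg_def by auto
  qed
  moreover have "finite {f. \<forall>x. (x \<in> {1..n} \<longrightarrow> f x \<in> {0..i}) \<and> (x \<notin> {1..n} \<longrightarrow> f x = 0)}"
    by (rule finite_set_of_finite_funs) simp_all
  ultimately show ?thesis by (rule finite_subset)
qed

definition NN :: "nat \<Rightarrow> nat set \<Rightarrow> nat \<Rightarrow> nat" where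
  "NN n \<sigma> i = card {a \<in> monomials_deg n i. msupp n a = \<sigma>}"

lemma NN_le:
  assumes h: "bij_betw h {1..n} {1..n}" and ht: "h ` \<tau> = \<sigma>" and tn: "\<tau> \<subseteq> {1..n}"
  shows "NN n \<sigma> i \<le> NN n \<tau> i"
proof -
  define \<Phi> where "\<Phi> a = (\<lambda>j. if j \<in> {1..n} then a (h j) else 0)" for a :: "nat \<Rightarrow> nat"
  have inj: "inj_on \<Phi> {a \<in> monomials_deg n i. msupp n a = \<sigma>}"
  proof
    fix a b assume a: "a \<in> {a \<in> monomials_deg n i. msupp n a = \<sigma>}"
      and b: "b \<in> {a \<in> monomials_deg n i. msupp n a = \<sigma>}" and e: "\<Phi> a = \<Phi> b"
    show "a = b"
    proof
      fix x show "a x = b x"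
      proof (cases "x \<in> {1..n}")
        case True
        then obtain y where y: "y \<in> {1..n}" "h y = x" using h bij_betw_def by (metis imageE)
        have "\<Phi> a y = \<Phi> b y" using e by simp
        then show ?thesis using y by (simp add: \<Phi>_def)
      next
        case False then show ?thesis using a b unfolding monomials_deg_def by auto
      qed
    qed
  qed
  have img: "\<Phi> ` {a \<in> monomials_deg n i. msupp n a = \<sigma>} \<subseteq> {a \<in> monomials_deg n i. msupp n a = \<tau>}"
  proof
    fix b assume "b \<in> \<Phi> ` {a \<in> monomials_deg n i. msupp n a = \<sigma>}"
    then obtain a where a: "a \<in> monomials_deg n i" "msupp n a = \<sigma>" and b: "b = \<Phi> a" by auto
    have "(\<Sum>j\<in>{1..n}. b j) = (\<Sum>j\<in>{1..n}. a (h j))" by (simp add: b \<Phi>_def)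
    also have "\<dots> = (\<Sum>j\<in>{1..n}. a j)" using sum.reindex_bij_betw[OF h, of a] by simp
    finally have deg: "(\<Sum>j\<in>{1..n}. b j) = i" using a unfolding monomials_deg_def by simp
    have "msupp n b = \<tau>"
    proof -
      have "msupp n b = {j \<in> {1..n}. a (h j) \<noteq> 0}" by (auto simp: msupp_def b \<Phi>_def)
      also have "\<dots> = {j \<in> {1..n}. h j \<in> \<sigma>}"
        using a(2) h unfolding msupp_def bij_betw_def by auto
      also have "\<dots> = \<tau>"
      proof
        show "{j \<in> {1..n}. h j \<in> \<sigma>} \<subseteq> \<tau>"
        proof
          fix j assume j: "j \<in> {j \<in> {1..n}. h j \<in> \<sigma>}"
          then obtain t where t: "t \<in> \<tau>" "h t = h j" using ht by auto
          have "t \<in> {1..n}" "j \<in> {1..n}" using tn t j by auto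
          then have "t = j" using h t(2) unfolding bij_betw_def by (meson inj_onD)
          then show "j \<in> \<tau>" using t by simp
        qed
        show "\<tau> \<subseteq> {j \<in> {1..n}. h j \<in> \<sigma>}" using tn ht by auto
      qed
      finally show ?thesis .
    qed
    then show "b \<in> {a \<in> monomials_deg n i. msupp n a = \<tau>}"
      using deg by (auto simp: monomials_deg_def b \<Phi>_def)
  qed
  show ?thesis unfolding NN_def
    by (rule card_inj_on_le[OF inj img]) (simp add: finite_mono)
qed

lemma exists_bij:
  fixes n :: nat and \<sigma> \<tau> :: "nat set"
  assumes "\<sigma> \<subseteq> {1..n}" "\<tau> \<subseteq> {1..n}" "card \<sigma> = card \<tau>"
  shows "\<exists>h. bij_betw h {1..n} {1..n} \<and> h ` \<tau> = \<sigma>"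
proof -
  have f\<sigma>: "finite \<sigma>" "finite \<tau>"
    using finite_subset[OF assms(1)] finite_subset[OF assms(2)] by simp_all
  obtain f where f: "bij_betw f \<tau> \<sigma>" using finite_same_card_bij[OF f\<sigma>(2,1) assms(3)[symmetric]] by blast
  have "card ({1..n} - \<tau>) = card ({1..n} - \<sigma>)"
    using assms f\<sigma> by (simp add: card_Diff_subset)
  then obtain g where g: "bij_betw g ({1..n} - \<tau>) ({1..n} - \<sigma>)"
    using finite_same_card_bij[of "{1..n} - \<tau>" "{1..n} - \<sigma>"] by auto
  define h where "h x = (if x \<in> \<tau> then f x else g x)" for x
  have "bij_betw h (\<tau> \<union> ({1..n} - \<tau>)) (\<sigma> \<union> ({1..n} - \<sigma>))"
    unfolding h_def
  proof (rule bij_betw_combine)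
    show "bij_betw (\<lambda>x. if x \<in> \<tau> then f x else g x) \<tau> \<sigma>"
      using f by (rule bij_betw_cong[THEN iffD1, rotated]) simp
    show "bij_betw (\<lambda>x. if x \<in> \<tau> then f x else g x) ({1..n} - \<tau>) ({1..n} - \<sigma>)"
      using g by (rule bij_betw_cong[THEN iffD1, rotated]) simp
    show "\<sigma> \<inter> ({1..n} - \<sigma>) = {}" by auto
  qed
  moreover have "\<tau> \<union> ({1..n} - \<tau>) = {1..n}" "\<sigma> \<union> ({1..n} - \<sigma>) = {1..n}" using assms by auto
  moreover have "h ` \<tau> = \<sigma>" using f unfolding h_def bij_betw_def by simp
  ultimately show ?thesis by auto
qed

lemma NN_sym:
  assumes "\<sigma> \<subseteq> {1..n}" "\<tau> \<subseteq> {1..n}" "card \<sigma> = card \<tau>"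
  shows "NN n \<sigma> i = NN n \<tau> i"
proof -
  obtain h where h: "bij_betw h {1..n} {1..n}" "h ` \<tau> = \<sigma>" using exists_bij[OF assms] by blast
  obtain k where k: "bij_betw k {1..n} {1..n}" "k ` \<sigma> = \<tau>"
    using exists_bij[OF assms(2,1) assms(3)[symmetric]] by blast
  show ?thesis using NN_le[OF h assms(2)] NN_le[OF k assms(1)] by (meson le_antisym)
qed

definition gg :: "nat \<Rightarrow> nat \<Rightarrow> nat \<Rightarrow> nat" where
  "gg n j i = NN n {1..j} i"

definition fv :: "nat set set \<Rightarrow> nat \<Rightarrow> nat" where
  "fv \<Delta> j = card {\<sigma>\<in>\<Delta>. card \<sigma> = j}"

lemma complex_finite: "simplicial_complex n \<Delta> \<Longrightarrow> finite \<Delta>"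
proof -
  assume "simplicial_complex n \<Delta>"
  then have "\<Delta> \<subseteq> Pow {1..n}" unfolding simplicial_complex_def by blast
  then show "finite \<Delta>" by (rule finite_subset) simp
qed

lemma notin_iff:
  assumes "simplicial_complex n \<Delta>"
  shows "(\<not> in_SR_ideal n \<Delta> a) \<longleftrightarrow> msupp n a \<in> \<Delta>"
proof
  have ms: "msupp n a \<subseteq> {1..n}" unfolding msupp_def by blast
  have cl: "\<forall>\<sigma>\<in>\<Delta>. \<forall>\<tau>. \<tau> \<subseteq> \<sigma> \<longrightarrow> \<tau> \<in> \<Delta>" using assms unfolding simplicial_complex_def by blast
  show "\<not> in_SR_ideal n \<Delta> a \<Longrightarrow> msupp n a \<in> \<Delta>" using ms unfolding in_SR_ideal_def by blast
  show "msupp n a \<in> \<Delta> \<Longrightarrow> \<not> in_SR_ideal n \<Delta> a" using cl unfolding in_SR_ideal_def by blast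
qed

lemma H_NN:
  assumes D: "simplicial_complex n \<Delta>"
  shows "SR_hilbert n \<Delta> i = (\<Sum>\<sigma>\<in>\<Delta>. real (NN n \<sigma> i))"
proof -
  have "{a \<in> monomials_deg n i. \<not> in_SR_ideal n \<Delta> a} = (\<Union>\<sigma>\<in>\<Delta>. {a \<in> monomials_deg n i. msupp n a = \<sigma>})"
    using notin_iff[OF D] by auto
  then have "card {a \<in> monomials_deg n i. \<not> in_SR_ideal n \<Delta> a} = (\<Sum>\<sigma>\<in>\<Delta>. NN n \<sigma> i)"
    unfolding NN_def
    by (simp, subst card_UN_disjoint) (auto simp: complex_finite[OF D] finite_mono)
  then show ?thesis unfolding SR_hilbert_def by simp
qed

lemma NN_card: "\<sigma> \<subseteq> {1..n} \<Longrightarrow> NN n \<sigma> i = gg n (card \<sigma>) i"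
  unfolding gg_def
proof (rule NN_sym)
  assume s: "\<sigma> \<subseteq> {1..n}"
  then have "card \<sigma> \<le> n" using card_mono[OF _ s] by simp
  then show "{1..card \<sigma>} \<subseteq> {1..n}" by auto
qed auto

lemma H_f:
  assumes D: "simplicial_complex n \<Delta>"
  shows "SR_hilbert n \<Delta> i = (\<Sum>j\<le>n. real (fv \<Delta> j) * real (gg n j i))"
proof -
  have sub: "\<forall>\<sigma>\<in>\<Delta>. \<sigma> \<subseteq> {1..n}" using D unfolding simplicial_complex_def by blast
  have "SR_hilbert n \<Delta> i = (\<Sum>\<sigma>\<in>\<Delta>. real (gg n (card \<sigma>) i))"
    unfolding H_NN[OF D] using sub NN_card by simp
  also have "\<dots> = (\<Sum>j\<le>n. \<Sum>\<sigma>\<in>{\<sigma>\<in>\<Delta>. card \<sigma> = j}. real (gg n (card \<sigma>) i))"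
  proof (rule sum.group[symmetric])
    show "finite \<Delta>" using complex_finite[OF D] .
    show "card ` \<Delta> \<subseteq> {..n}" using sub card_mono[of "{1..n}"] by fastforce
  qed simp
  also have "\<dots> = (\<Sum>j\<le>n. real (fv \<Delta> j) * real (gg n j i))"
    unfolding fv_def by (intro sum.cong refl) simp
  finally show ?thesis .
qed

lemma skel_complex: "simplicial_complex n (skel n l)"
  unfolding simplicial_complex_def skel_def
proof (intro conjI ballI allI impI)
  have "{} \<in> {\<sigma>. \<sigma> \<subseteq> {1..n} \<and> card \<sigma> \<le> l}" by simp
  then show "{\<sigma>. \<sigma> \<subseteq> {1..n} \<and> card \<sigma> \<le> l} \<noteq> {}" by blast
next
  fix \<sigma> \<tau> assume s: "\<sigma> \<in> {\<sigma>. \<sigma> \<subseteq> {1..n} \<and> card \<sigma> \<le> l}" and t: "\<tau> \<subseteq> \<sigma>"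
  then have "finite \<sigma>" using finite_subset by blast
  then show "\<tau> \<in> {\<sigma>. \<sigma> \<subseteq> {1..n} \<and> card \<sigma> \<le> l}" using s t card_mono[of \<sigma> \<tau>] by auto
qed auto

lemma fv_skel: "fv (skel n l) j = (if j \<le> l then n choose j else 0)"
proof (cases "j \<le> l")
  case True
  then have "{\<sigma>\<in>skel n l. card \<sigma> = j} = {B. B \<subseteq> {1..n} \<and> card B = j}" unfolding skel_def by auto
  then show ?thesis using True n_subsets[of "{1..n}" j] unfolding fv_def by simp
next
  case False
  then have e: "{\<sigma>\<in>skel n l. card \<sigma> = j} = {}" unfolding skel_def by auto
  show ?thesis unfolding fv_def e using False by simp
qed

lemma H_skel: "SR_hilbert n (skel n l) i = (\<Sum>j\<le>n. (if j \<le> l then real (n choose j) else 0) * real (gg n j i))"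
  unfolding H_f[OF skel_complex] fv_skel by (intro sum.cong refl) simp

lemma gg_zero:
  assumes "i < j" shows "gg n j i = 0"
proof -
  have e: "{a \<in> monomials_deg n i. msupp n a = {1..j}} = {}"
  proof (rule ccontr)
    assume "{a \<in> monomials_deg n i. msupp n a = {1..j}} \<noteq> {}"
    then obtain a where a: "a \<in> monomials_deg n i" "msupp n a = {1..j}" by auto
    have ms: "k \<in> {1..j} \<Longrightarrow> k \<in> {1..n} \<and> a k \<noteq> 0" for k
      using a(2) unfolding msupp_def by blast
    then have jn: "{1..j} \<subseteq> {1..n}" by blast
    have "j = (\<Sum>k\<in>{1..j}. (1::nat))" by simp
    also have "\<dots> \<le> (\<Sum>k\<in>{1..j}. a k)"
      by (rule sum_mono) (use ms in fastforce)
    also have "\<dots> \<le> (\<Sum>k\<in>{1..n}. a k)" using jn by (intro sum_mono2) auto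
    also have "\<dots> = i" using a(1) unfolding monomials_deg_def by simp
    finally show False using assms by simp
  qed
  show ?thesis unfolding gg_def NN_def e by simp
qed

lemma gg_pos:
  assumes "j \<le> n" shows "gg n j j > 0"
proof -
  define a where "a = (\<lambda>k. if k \<in> {1..j} then (1::nat) else 0)"
  have "(\<Sum>k\<in>{1..n}. a k) = (\<Sum>k\<in>{1..j}. a k)"
    by (rule sum.mono_neutral_right) (use assms in \<open>auto simp: a_def\<close>)
  also have "\<dots> = (\<Sum>k\<in>{1..j}. 1)" by (intro sum.cong refl) (simp add: a_def)
  finally have sa: "(\<Sum>k\<in>{1..n}. a k) = j" by simp
  have m: "a \<in> monomials_deg n j" unfolding monomials_deg_def
    using sa assms by (simp add: a_def)
  have su: "msupp n a = {1..j}" unfolding msupp_def a_def using assms by auto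
  have fin: "finite {a \<in> monomials_deg n j. msupp n a = {1..j}}" using finite_mono by simp
  have "{a \<in> monomials_deg n j. msupp n a = {1..j}} \<noteq> {}" using m su by blast
  then show ?thesis unfolding gg_def NN_def using fin card_gt_0_iff by blast
qed

lemma LYM:
  assumes D: "simplicial_complex n \<Delta>" and jn: "j < n"
  shows "fv \<Delta> (Suc j) * Suc j \<le> fv \<Delta> j * (n - j)"
proof -
  define F0 where "F0 = {\<sigma>\<in>\<Delta>. card \<sigma> = j}"
  define F1 where "F1 = {\<sigma>\<in>\<Delta>. card \<sigma> = Suc j}"
  have fD: "finite \<Delta>" using complex_finite[OF D] .
  have f0: "finite F0" "finite F1" unfolding F0_def F1_def using fD by auto
  have sub: "\<forall>\<sigma>\<in>\<Delta>. \<sigma> \<subseteq> {1..n}" and cl: "\<forall>\<sigma>\<in>\<Delta>. \<forall>\<tau>. \<tau> \<subseteq> \<sigma> \<longrightarrow> \<tau> \<in> \<Delta>"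
    using D unfolding simplicial_complex_def by blast+
  have swap: "(\<Sum>\<sigma>\<in>F1. \<Sum>\<tau>\<in>F0. of_bool (\<tau> \<subseteq> \<sigma>)) = (\<Sum>\<tau>\<in>F0. \<Sum>\<sigma>\<in>F1. (of_bool (\<tau> \<subseteq> \<sigma>) :: nat))"
    by (rule sum.swap)
  have lhs: "(\<Sum>\<tau>\<in>F0. (of_bool (\<tau> \<subseteq> \<sigma>) :: nat)) = Suc j" if s: "\<sigma> \<in> F1" for \<sigma>
  proof -
    have "\<sigma> \<subseteq> {1..n}" "\<sigma> \<in> \<Delta>" using s sub unfolding F1_def by blast+
    then have fs: "finite \<sigma>" using finite_subset by blast
    have "F0 \<inter> {\<tau>. \<tau> \<subseteq> \<sigma>} = {\<tau>. \<tau> \<subseteq> \<sigma> \<and> card \<tau> = j}"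
      using \<open>\<sigma> \<in> \<Delta>\<close> cl unfolding F0_def by blast
    then have "(\<Sum>\<tau>\<in>F0. (of_bool (\<tau> \<subseteq> \<sigma>) :: nat)) = card \<sigma> choose j"
      using f0 n_subsets[OF fs, of j] by (simp add: sum_of_bool_eq)
    also have "\<dots> = Suc j" using s unfolding F1_def by (simp add: binomial_Suc_n)
    finally show ?thesis .
  qed
  have rhs: "(\<Sum>\<sigma>\<in>F1. (of_bool (\<tau> \<subseteq> \<sigma>) :: nat)) \<le> n - j" if t: "\<tau> \<in> F0" for \<tau>
  proof -
    have tn: "\<tau> \<subseteq> {1..n}" "card \<tau> = j" using t sub unfolding F0_def by auto
    have ft: "finite \<tau>" using tn finite_subset by blast
    have "F1 \<inter> {\<sigma>. \<tau> \<subseteq> \<sigma>} \<subseteq> (\<lambda>x. insert x \<tau>) ` ({1..n} - \<tau>)"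
    proof
      fix \<sigma> assume s: "\<sigma> \<in> F1 \<inter> {\<sigma>. \<tau> \<subseteq> \<sigma>}"
      then have sn: "\<sigma> \<subseteq> {1..n}" "card \<sigma> = Suc j" "\<tau> \<subseteq> \<sigma>" using sub unfolding F1_def by auto
      have fs: "finite \<sigma>" using sn finite_subset by blast
      have "card (\<sigma> - \<tau>) = 1" using sn tn fs by (simp add: card_Diff_subset[OF ft])
      then obtain x where x: "\<sigma> - \<tau> = {x}" by (meson card_1_singletonE)
      then have "\<sigma> = insert x \<tau>" "x \<in> {1..n} - \<tau>" using sn by auto
      then show "\<sigma> \<in> (\<lambda>x. insert x \<tau>) ` ({1..n} - \<tau>)" by blast
    qed
    then have "card (F1 \<inter> {\<sigma>. \<tau> \<subseteq> \<sigma>}) \<le> card ((\<lambda>x. insert x \<tau>) ` ({1..n} - \<tau>))"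
      by (intro card_mono) auto
    also have "\<dots> \<le> card ({1..n} - \<tau>)" by (rule card_image_le) simp
    also have "\<dots> = n - j" using tn ft by (simp add: card_Diff_subset)
    finally show ?thesis using f0 by (simp add: sum_of_bool_eq)
  qed
  have "fv \<Delta> (Suc j) * Suc j = (\<Sum>\<sigma>\<in>F1. Suc j)" unfolding fv_def F1_def by simp
  also have "\<dots> = (\<Sum>\<sigma>\<in>F1. \<Sum>\<tau>\<in>F0. (of_bool (\<tau> \<subseteq> \<sigma>) :: nat))"
    using lhs by (intro sum.cong refl) simp
  also have "\<dots> = (\<Sum>\<tau>\<in>F0. \<Sum>\<sigma>\<in>F1. (of_bool (\<tau> \<subseteq> \<sigma>) :: nat))" using swap .
  also have "\<dots> \<le> (\<Sum>\<tau>\<in>F0. n - j)" using rhs by (intro sum_mono) auto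
  also have "\<dots> = fv \<Delta> j * (n - j)" unfolding fv_def F0_def by simp
  finally show ?thesis .
qed

lemma telescope: "j \<le> m \<Longrightarrow> (\<Sum>l\<in>{j..m}. f l - f (Suc l)) = f j - (f (Suc m) :: real)"
proof (induction m)
  case 0 then show ?case by simp
next
  case (Suc m)
  show ?case
  proof (cases "j = Suc m")
    case True then show ?thesis by simp
  next
    case False
    then have "j \<le> m" using Suc.prems by simp
    moreover have "{j..Suc m} = insert (Suc m) {j..m}" using \<open>j \<le> m\<close> by auto
    ultimately show ?thesis using Suc.IH by simp
  qed
qed

lemma ratio_mono:
  assumes D: "simplicial_complex n \<Delta>" and jn: "j < n"
  shows "real (fv \<Delta> (Suc j)) / real (n choose Suc j) \<le> real (fv \<Delta> j) / real (n choose j)"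
proof -
  have b: "(n choose j) * (n - j) = (n choose Suc j) * Suc j"
    using jn by (metis binomial_absorb_comp binomial_absorption mult.commute)
  have "fv \<Delta> (Suc j) * (n choose j) * (n - j) = (n choose Suc j) * (fv \<Delta> (Suc j) * Suc j)"
    using b by (metis mult.assoc mult.commute)
  also have "\<dots> \<le> (n choose Suc j) * (fv \<Delta> j * (n - j))"
    using LYM[OF D jn] by (rule mult_left_mono) simp
  also have "\<dots> = fv \<Delta> j * (n choose Suc j) * (n - j)" by simp
  finally have "fv \<Delta> (Suc j) * (n choose j) \<le> fv \<Delta> j * (n choose Suc j)"
    using jn by simp
  then have "real (fv \<Delta> (Suc j)) * real (n choose j) \<le> real (fv \<Delta> j) * real (n choose Suc j)"
    by (metis of_nat_le_iff of_nat_mult)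
  moreover have "real (n choose Suc j) > 0" "real (n choose j) > 0" using jn by auto
  ultimately show ?thesis by (simp add: divide_simps)
qed

lemma decomp:
  assumes D: "simplicial_complex n \<Delta>"
  shows "\<exists>w. (\<forall>l. 0 \<le> w l) \<and> (\<forall>i. SR_hilbert n \<Delta> i = (\<Sum>l\<le>n. w l * SR_hilbert n (skel n l) i))"
proof -
  define r where "r j = (if j \<le> n then real (fv \<Delta> j) / real (n choose j) else 0)" for j
  define w where "w l = r l - r (Suc l)" for l
  have nonneg: "0 \<le> w l" for l
  proof -
    consider "l < n" | "l = n" | "l > n" by linarith
    then show ?thesis
    proof cases
      case 1 then show ?thesis using ratio_mono[OF D 1] unfolding w_def r_def by simp
    qed (auto simp: w_def r_def)
  qed
  have tel: "(\<Sum>l\<le>n. (if j \<le> l then w l else 0)) = r j" if j: "j \<le> n" for j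
  proof -
    have "(\<Sum>l\<le>n. (if j \<le> l then w l else 0)) = (\<Sum>l\<in>{l\<in>{..n}. j \<le> l}. w l)"
      by (rule sum.inter_filter[symmetric]) simp
    also have "{l\<in>{..n}. j \<le> l} = {j..n}" by auto
    also have "(\<Sum>l\<in>{j..n}. w l) = r j - r (Suc n)" unfolding w_def using telescope[OF j] .
    finally show ?thesis by (simp add: r_def)
  qed
  have "SR_hilbert n \<Delta> i = (\<Sum>l\<le>n. w l * SR_hilbert n (skel n l) i)" for i
  proof -
    have "(\<Sum>l\<le>n. w l * SR_hilbert n (skel n l) i)
        = (\<Sum>l\<le>n. \<Sum>j\<le>n. w l * ((if j \<le> l then real (n choose j) else 0) * real (gg n j i)))"
      unfolding H_skel by (simp add: sum_distrib_left)
    also have "\<dots> = (\<Sum>j\<le>n. \<Sum>l\<le>n. w l * ((if j \<le> l then real (n choose j) else 0) * real (gg n j i)))"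
      by (rule sum.swap)
    also have "\<dots> = (\<Sum>j\<le>n. (\<Sum>l\<le>n. (if j \<le> l then w l else 0)) * (real (n choose j) * real (gg n j i)))"
      by (intro sum.cong refl) (auto simp: sum_distrib_right intro!: sum.cong)
    also have "\<dots> = (\<Sum>j\<le>n. real (fv \<Delta> j) * real (gg n j i))"
      by (intro sum.cong refl) (simp add: tel r_def)
    finally show ?thesis using H_f[OF D] by simp
  qed
  then show ?thesis using nonneg by blast
qed

lemma expand:
  "(\<Sum>l\<le>n. c l * SR_hilbert n (skel n l) i)
   = (\<Sum>j\<le>n. (\<Sum>l\<le>n. (if j \<le> l then c l else 0)) * (real (n choose j) * real (gg n j i)))"
proof -
  have "(\<Sum>l\<le>n. c l * SR_hilbert n (skel n l) i)
      = (\<Sum>l\<le>n. \<Sum>j\<le>n. c l * ((if j \<le> l then real (n choose j) else 0) * real (gg n j i)))"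
    unfolding H_skel by (simp add: sum_distrib_left)
  also have "\<dots> = (\<Sum>j\<le>n. \<Sum>l\<le>n. c l * ((if j \<le> l then real (n choose j) else 0) * real (gg n j i)))"
    by (rule sum.swap)
  also have "\<dots> = (\<Sum>j\<le>n. (\<Sum>l\<le>n. (if j \<le> l then c l else 0)) * (real (n choose j) * real (gg n j i)))"
    by (intro sum.cong refl) (auto simp: sum_distrib_right intro!: sum.cong)
  finally show ?thesis .
qed

lemma indep:
  assumes h: "\<forall>i. (\<Sum>l\<le>n. c l * SR_hilbert n (skel n l) i) = 0"
  shows "\<forall>l\<le>n. c l = 0"
proof -
  define D where "D j = (\<Sum>l\<le>n. (if j \<le> l then c l else 0))" for j
  have h2: "(\<Sum>j\<le>n. D j * (real (n choose j) * real (gg n j i))) = 0" for i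
    using h expand[where n=n and c=c and i=i] unfolding D_def by simp
  have Dz: "j \<le> n \<longrightarrow> D j = 0" for j
  proof (induction j rule: less_induct)
    case (less j)
    show ?case
    proof
      assume jn: "j \<le> n"
      have "(\<Sum>k\<le>n. D k * (real (n choose k) * real (gg n k j)))
          = (\<Sum>k\<le>n. if k = j then D j * (real (n choose j) * real (gg n j j)) else 0)"
      proof (intro sum.cong refl)
        fix k assume k: "k \<in> {..n}"
        consider "k < j" | "k = j" | "k > j" by linarith
        then show "D k * (real (n choose k) * real (gg n k j)) = (if k = j then D j * (real (n choose j) * real (gg n j j)) else 0)"
          by cases (use less k gg_zero in auto)
      qed
      also have "\<dots> = D j * (real (n choose j) * real (gg n j j))" using jn by simp
      finally have "D j * (real (n choose j) * real (gg n j j)) = 0" using h2[of j] by simp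
      moreover have "real (n choose j) > 0" "real (gg n j j) > 0" using jn gg_pos by auto
      ultimately show "D j = 0" by simp
    qed
  qed
  show ?thesis
  proof (intro allI impI)
    fix l assume ln: "l \<le> n"
    have "D l - D (Suc l) = (\<Sum>k\<le>n. (if k = l then c k else 0))"
      unfolding D_def by (subst sum_subtractf[symmetric]) (intro sum.cong refl, auto)
    also have "\<dots> = c l" using ln by simp
    finally have "c l = D l - D (Suc l)" by simp
    moreover have "D (Suc l) = 0"
    proof (cases "Suc l \<le> n")
      case True then show ?thesis using Dz by blast
    next
      case False then show ?thesis unfolding D_def by (intro sum.neutral) auto
    qed
    ultimately show "c l = 0" using Dz ln by simp
  qed
qed

lemma H0: "SR_hilbert n (skel n l) 0 = 1"
proof -
  have "monomials_deg n 0 = {\<lambda>_. 0}"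
    unfolding monomials_deg_def by (auto simp: fun_eq_iff) (metis atLeastAtMost_iff)
  moreover have "msupp n (\<lambda>_. 0) \<in> skel n l" by (simp add: msupp_def skel_def)
  then have "\<not> in_SR_ideal n (skel n l) (\<lambda>_. 0)" using notin_iff[OF skel_complex] by blast
  ultimately have "{a \<in> monomials_deg n 0. \<not> in_SR_ideal n (skel n l) a} = {\<lambda>_. 0}" by auto
  then show ?thesis unfolding SR_hilbert_def by simp
qed

lemma finite_Cx: "finite {\<Delta>. simplicial_complex n \<Delta>}"
proof -
  have "{\<Delta>. simplicial_complex n \<Delta>} \<subseteq> Pow (Pow {1..n})"
    unfolding simplicial_complex_def by auto
  then show ?thesis by (rule finite_subset) simp
qed

lemma cone_eq:
  "SR_cone n = {f. \<exists>c :: nat \<Rightarrow> real. (\<forall>l. 0 \<le> c l) \<and>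
             (\<forall>i. f i = (\<Sum>l\<le>n. c l * SR_hilbert n (skel n l) i))}"
  (is "_ = ?K")
proof
  show "SR_cone n \<subseteq> ?K"
  proof
    fix f assume "f \<in> SR_cone n"
    then obtain c where c: "\<forall>\<Delta>. 0 \<le> c \<Delta>"
      "\<forall>i. f i = (\<Sum>\<Delta>\<in>{\<Delta>. simplicial_complex n \<Delta>}. c \<Delta> * SR_hilbert n \<Delta> i)"
      unfolding SR_cone_def by blast
    define W where "W \<Delta> = (SOME w. (\<forall>l. 0 \<le> w l) \<and> (\<forall>i. SR_hilbert n \<Delta> i = (\<Sum>l\<le>n. w l * SR_hilbert n (skel n l) i)))" for \<Delta>
    have W: "(\<forall>l. 0 \<le> W \<Delta> l) \<and> (\<forall>i. SR_hilbert n \<Delta> i = (\<Sum>l\<le>n. W \<Delta> l * SR_hilbert n (skel n l) i))"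
      if "simplicial_complex n \<Delta>" for \<Delta>
      unfolding W_def by (rule someI_ex[OF decomp[OF that]])
    define e where "e l = (\<Sum>\<Delta>\<in>{\<Delta>. simplicial_complex n \<Delta>}. c \<Delta> * W \<Delta> l)" for l
    have "0 \<le> e l" for l unfolding e_def using c(1) W by (intro sum_nonneg) auto
    moreover have "f i = (\<Sum>l\<le>n. e l * SR_hilbert n (skel n l) i)" for i
    proof -
      have "f i = (\<Sum>\<Delta>\<in>{\<Delta>. simplicial_complex n \<Delta>}. \<Sum>l\<le>n. c \<Delta> * (W \<Delta> l * SR_hilbert n (skel n l) i))"
        using c(2) W by (simp add: sum_distrib_left)
      also have "\<dots> = (\<Sum>l\<le>n. \<Sum>\<Delta>\<in>{\<Delta>. simplicial_complex n \<Delta>}. c \<Delta> * (W \<Delta> l * SR_hilbert n (skel n l) i))"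
        by (rule sum.swap)
      also have "\<dots> = (\<Sum>l\<le>n. e l * SR_hilbert n (skel n l) i)"
        unfolding e_def by (simp add: sum_distrib_right mult.assoc)
      finally show ?thesis .
    qed
    ultimately show "f \<in> ?K" by blast
  qed
  show "?K \<subseteq> SR_cone n"
  proof
    fix f assume "f \<in> ?K"
    then obtain c where c: "\<forall>l. 0 \<le> c l" "\<forall>i. f i = (\<Sum>l\<le>n. c l * SR_hilbert n (skel n l) i)"
      by blast
    define c' where "c' \<Delta> = (\<Sum>l\<le>n. if skel n l = \<Delta> then c l else 0)" for \<Delta>
    have "0 \<le> c' \<Delta>" for \<Delta> unfolding c'_def using c(1) by (intro sum_nonneg) auto
    moreover have "f i = (\<Sum>\<Delta>\<in>{\<Delta>. simplicial_complex n \<Delta>}. c' \<Delta> * SR_hilbert n \<Delta> i)" for i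
    proof -
      have "(\<Sum>\<Delta>\<in>{\<Delta>. simplicial_complex n \<Delta>}. c' \<Delta> * SR_hilbert n \<Delta> i)
         = (\<Sum>\<Delta>\<in>{\<Delta>. simplicial_complex n \<Delta>}. \<Sum>l\<le>n. if skel n l = \<Delta> then c l * SR_hilbert n (skel n l) i else 0)"
        unfolding c'_def sum_distrib_right by (intro sum.cong refl) auto
      also have "\<dots> = (\<Sum>l\<le>n. \<Sum>\<Delta>\<in>{\<Delta>. simplicial_complex n \<Delta>}. if skel n l = \<Delta> then c l * SR_hilbert n (skel n l) i else 0)"
        by (rule sum.swap)
      also have "\<dots> = (\<Sum>l\<le>n. c l * SR_hilbert n (skel n l) i)"
        using finite_Cx skel_complex by (simp add: sum.delta)
      finally show ?thesis using c(2) by simp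
    qed
    ultimately show "f \<in> SR_cone n" unfolding SR_cone_def by blast
  qed
qed

lemma single:
  assumes "\<forall>k\<le>n. k \<noteq> l \<longrightarrow> \<alpha> k = 0" "l \<le> n"
  shows "(\<Sum>k\<le>n. \<alpha> k * SR_hilbert n (skel n k) i) = \<alpha> l * SR_hilbert n (skel n l) i"
proof -
  have "(\<Sum>k\<le>n. \<alpha> k * SR_hilbert n (skel n k) i) = (\<Sum>k\<le>n. if k = l then \<alpha> l * SR_hilbert n (skel n l) i else 0)"
    using assms(1) by (intro sum.cong refl) auto
  also have "\<dots> = \<alpha> l * SR_hilbert n (skel n l) i" using assms(2) by simp
  finally show ?thesis .
qed

theorem corollary4p15:
  fixes n :: nat
  shows "(\<forall>v. extremal_ray (SR_cone n) v \<longleftrightarrow>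
            (\<exists>l\<le>n. \<exists>t>0. \<forall>i. v i = t * SR_hilbert n (skel n l) i))
       \<and> (\<forall>c :: nat \<Rightarrow> real. (\<forall>i. (\<Sum>l\<le>n. c l * SR_hilbert n (skel n l) i) = 0)
             \<longrightarrow> (\<forall>l\<le>n. c l = 0))
       \<and> SR_cone n = {f. \<exists>c :: nat \<Rightarrow> real. (\<forall>l. 0 \<le> c l) \<and>
             (\<forall>i. f i = (\<Sum>l\<le>n. c l * SR_hilbert n (skel n l) i))}"
proof (intro conjI)
  show "\<forall>c :: nat \<Rightarrow> real. (\<forall>i. (\<Sum>l\<le>n. c l * SR_hilbert n (skel n l) i) = 0)
             \<longrightarrow> (\<forall>l\<le>n. c l = 0)" using indep by blast
next
  show "SR_cone n = {f. \<exists>c :: nat \<Rightarrow> real. (\<forall>l. 0 \<le> c l) \<and>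
             (\<forall>i. f i = (\<Sum>l\<le>n. c l * SR_hilbert n (skel n l) i))}" by (rule cone_eq)
next
  show "\<forall>v. extremal_ray (SR_cone n) v \<longleftrightarrow>
            (\<exists>l\<le>n. \<exists>t>0. \<forall>i. v i = t * SR_hilbert n (skel n l) i)"
  proof
  fix v :: "nat \<Rightarrow> real"
  let ?H = "\<lambda>l i. SR_hilbert n (skel n l) i"
  have inC: "f \<in> SR_cone n \<longleftrightarrow> (\<exists>c. (\<forall>l. 0 \<le> c l) \<and> (\<forall>i. f i = (\<Sum>l\<le>n. c l * ?H l i)))" for f
    using cone_eq[of n] by blast
  show "extremal_ray (SR_cone n) v \<longleftrightarrow> (\<exists>l\<le>n. \<exists>t>0. \<forall>i. v i = t * ?H l i)"
  proof
    assume ext: "extremal_ray (SR_cone n) v"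
    then obtain c where c: "\<forall>l. 0 \<le> c l" "\<forall>i. v i = (\<Sum>l\<le>n. c l * ?H l i)"
      unfolding extremal_ray_def inC by blast
    have "\<exists>l\<le>n. c l \<noteq> 0"
    proof (rule ccontr)
      assume "\<not> (\<exists>l\<le>n. c l \<noteq> 0)"
      then have "v = (\<lambda>i. 0)" using c(2) by (auto simp: fun_eq_iff)
      then show False using ext unfolding extremal_ray_def by simp
    qed
    then obtain l where l: "l \<le> n" "c l > 0" using c(1) by (metis less_eq_real_def)
    define ca where "ca k = (if k = l then c l else 0)" for k
    define cb where "cb k = (if k = l then 0 else c k)" for k
    define a where "a i = (\<Sum>k\<le>n. ca k * ?H k i)" for i
    define b where "b i = (\<Sum>k\<le>n. cb k * ?H k i)" for i
    have aC: "a \<in> SR_cone n" unfolding inC a_def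
      by (rule exI[of _ ca]) (simp add: ca_def c(1))
    have bC: "b \<in> SR_cone n" unfolding inC b_def
      by (rule exI[of _ cb]) (simp add: cb_def c(1))
    have vab: "\<forall>i. v i = a i + b i"
    proof
      fix i
      have "v i = (\<Sum>k\<le>n. (ca k + cb k) * ?H k i)" unfolding c(2)[rule_format]
        by (intro sum.cong refl) (simp add: ca_def cb_def)
      then show "v i = a i + b i" unfolding a_def b_def by (simp add: distrib_right sum.distrib)
    qed
    obtain t where t: "t \<ge> 0" "\<forall>i. a i = t * v i"
      using ext aC bC vab unfolding extremal_ray_def by blast
    have ai: "a i = c l * ?H l i" for i
      unfolding a_def using single[of n l ca i] l by (simp add: ca_def)
    have "c l = t * v 0" using ai[of 0] t(2) H0 by simp
    then have tp: "t > 0" using l t(1) by (cases "t = 0") auto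
    have "\<forall>i. v i = (c l / t) * ?H l i" using ai t(2) tp by (simp add: field_simps)
    then show "\<exists>l\<le>n. \<exists>t>0. \<forall>i. v i = t * ?H l i" using l tp by (intro exI[of _ l] conjI exI[of _ "c l / t"]) auto
  next
    assume "\<exists>l\<le>n. \<exists>t>0. \<forall>i. v i = t * ?H l i"
    then obtain l t where l: "l \<le> n" "t > 0" "\<forall>i. v i = t * ?H l i" by blast
    have "\<forall>i. v i = (\<Sum>k\<le>n. (if k = l then t else 0) * ?H k i)"
      using l single[of n l "\<lambda>k. if k = l then t else 0"] by simp
    then have vC: "v \<in> SR_cone n" unfolding inC
      using l by (intro exI[of _ "\<lambda>k. if k = l then t else 0"]) auto
    have vnz: "v \<noteq> (\<lambda>i. 0)" using l(2,3) H0 by (metis mult.right_neutral less_irrefl)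
    have split: "(\<exists>s\<ge>0. \<forall>i. a i = s * v i) \<and> (\<exists>s\<ge>0. \<forall>i. b i = s * v i)"
      if aC: "a \<in> SR_cone n" and bC: "b \<in> SR_cone n" and vab: "\<forall>i. v i = a i + b i" for a b
    proof -
      obtain \<alpha> where \<alpha>: "\<forall>k. 0 \<le> \<alpha> k" "\<forall>i. a i = (\<Sum>k\<le>n. \<alpha> k * ?H k i)" using aC inC by blast
      obtain \<beta> where \<beta>: "\<forall>k. 0 \<le> \<beta> k" "\<forall>i. b i = (\<Sum>k\<le>n. \<beta> k * ?H k i)" using bC inC by blast
      define \<delta> where "\<delta> k = (if k = l then t else 0)" for k
      have dH: "(\<Sum>k\<le>n. \<delta> k * ?H k i) = v i" for i
        using single[of n l \<delta> i] l by (simp add: \<delta>_def)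
      have "\<forall>i. (\<Sum>k\<le>n. (\<alpha> k + \<beta> k - \<delta> k) * ?H k i) = 0"
      proof
        fix i
        have "(\<Sum>k\<le>n. (\<alpha> k + \<beta> k - \<delta> k) * ?H k i)
            = (\<Sum>k\<le>n. \<alpha> k * ?H k i) + (\<Sum>k\<le>n. \<beta> k * ?H k i) - (\<Sum>k\<le>n. \<delta> k * ?H k i)"
          by (simp add: left_diff_distrib distrib_right sum.distrib sum_subtractf)
        also have "\<dots> = a i + b i - v i" using \<alpha> \<beta> dH by simp
        finally show "(\<Sum>k\<le>n. (\<alpha> k + \<beta> k - \<delta> k) * ?H k i) = 0" using vab by simp
      qed
      then have z0: "\<forall>k\<le>n. \<alpha> k + \<beta> k - \<delta> k = 0" by (rule indep)
      then have z: "\<forall>k\<le>n. \<alpha> k + \<beta> k - (if k = l then t else 0) = 0" by (simp add: \<delta>_def)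
      have ab0: "\<alpha> k = 0 \<and> \<beta> k = 0" if "k \<le> n" "k \<noteq> l" for k
      proof -
        have "\<alpha> k + \<beta> k = 0" using z that by simp
        moreover have "0 \<le> \<alpha> k" "0 \<le> \<beta> k" using \<alpha>(1) \<beta>(1) by blast+
        ultimately show ?thesis by linarith
      qed
      then have a0: "\<forall>k\<le>n. k \<noteq> l \<longrightarrow> \<alpha> k = 0" and b0: "\<forall>k\<le>n. k \<noteq> l \<longrightarrow> \<beta> k = 0" by blast+
      have ai: "a i = \<alpha> l * ?H l i" for i
        using single[OF a0 l(1), of i] \<alpha>(2) by simp
      have bi: "b i = \<beta> l * ?H l i" for i
        using single[OF b0 l(1), of i] \<beta>(2) by simp
      have "\<forall>i. a i = (\<alpha> l / t) * v i" "\<forall>i. b i = (\<beta> l / t) * v i"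
        using ai bi l(2,3) by (simp_all add: field_simps)
      moreover have "\<alpha> l / t \<ge> 0" "\<beta> l / t \<ge> 0" using \<alpha>(1) \<beta>(1) l(2) by simp_all
      ultimately show ?thesis by blast
    qed
    show "extremal_ray (SR_cone n) v" unfolding extremal_ray_def using vC vnz split by blast
  qed
  qed
qed

end
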